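(* Let $\mathcal L$ be a geometric lattice, $(\mathcal E,\iota)$ a modular extension of $\mathcal L$, and $F$ a modular coatom of $\mathcal L$. Let $P=\mathcal L\cup_{[\hat0,F]}\mathcal E=\{(A,B)\in\mathcal L\times\mathcal E:\ A\wedge F=\iota^{-1}(B\wedge\iota(F))\}$ with the order induced from $\mathcal L\times\mathcal E$ (a geometric lattice). Then the subset $\mathcal M=\{(A,B)\in P:\ \exists H\in\mathrm{At}(\mathcal L)\text{ with }H\not\le F,\ H\le A,\ \iota(H)\le B\}$ is a modular cut of $P$.
   Context: A geometric lattice is a finite lattice (bottom $\hat0$, top $\hat1$, join $\vee$, meet $\wedge$) which is ranked (rank function $\mathrm{rk}$), atomic and semimodular ($\mathrm{rk}(F_1\wedge F_2)+\mathrm{rk}(F_1\vee F_2)\le\mathrm{rk}(F_1)+\mathrm{rk}(F_2)$); its elements are called flats, its rank-one elements atoms ($\mathrm{At}(\mathcal L)$), and a coatom is a flat of rank $\mathrm{rk}(\hat1)-1$. A flat $F$ is modular if $\mathrm{rk}(F\wedge F')+\mathrm{rk}(F\vee F')=\mathrm{rk}(F)+\mathrm{rk}(F')$ for every flat $F'$. An embedding of geometric lattices is an injective order-preserving map preserving joins and sending atoms to atoms. A modular extension of $\mathcal L$ is a pair $(\mathcal E,\iota)$ with $\mathcal E$ a geometric lattice and $\iota:\mathcal L\to\mathcal E$ an embedding whose image is an interval $[\hat0,F_\iota]$ with $F_\iota$ modular in $\mathcal E$. A modular cut of a geometric lattice $P$ is a subset $\mathcal M\subseteq P$ which is upward closed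 and such that whenever $X,Y\in\mathcal M$ satisfy $\mathrm{rk}(X)+\mathrm{rk}(Y)=\mathrm{rk}(X\wedge Y)+\mathrm{rk}(X\vee Y)$, then $X\wedge Y\in\mathcal M$. *)

theory Defs
  imports "HOL-Library.Finite_Lattice" "HOL-Library.Product_Order"
begin

text \<open>All lattice-theoretic notions are defined relative to a finite carrier set S
  inside an ambient partially ordered type, with the induced order. For a type
  that is itself a finite lattice one takes S = UNIV.\<close>

definition is_meet_in :: "'c::order set \<Rightarrow> 'c \<Rightarrow> 'c \<Rightarrow> 'c \<Rightarrow> bool" where
  "is_meet_in S x y m \<longleftrightarrow> m \<in> S \<and> m \<le> x \<and> m \<le> y \<and> (\<forall>z\<in>S. z \<le> x \<and> z \<le> y \<longrightarrow> z \<le> m)"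

definition is_join_in :: "'c::order set \<Rightarrow> 'c \<Rightarrow> 'c \<Rightarrow> 'c \<Rightarrow> bool" where
  "is_join_in S x y j \<longleftrightarrow> j \<in> S \<and> x \<le> j \<and> y \<le> j \<and> (\<forall>z\<in>S. x \<le> z \<and> y \<le> z \<longrightarrow> j \<le> z)"

definition meet_in :: "'c::order set \<Rightarrow> 'c \<Rightarrow> 'c \<Rightarrow> 'c" where
  "meet_in S x y = (THE m. is_meet_in S x y m)"

definition join_in :: "'c::order set \<Rightarrow> 'c \<Rightarrow> 'c \<Rightarrow> 'c" where
  "join_in S x y = (THE j. is_join_in S x y j)"

definition is_lub_in :: "'c::order set \<Rightarrow> 'c set \<Rightarrow> 'c \<Rightarrow> bool" where
  "is_lub_in S A j \<longleftrightarrow> j \<in> S \<and> (\<forall>a\<in>A. a \<le> j) \<and> (\<forall>z\<in>S. (\<forall>a\<in>A. a \<le> z) \<longrightarrow> j \<le> z)"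

definition rank_in :: "'c::order set \<Rightarrow> 'c \<Rightarrow> nat" where
  "rank_in S x = Max {card C | C. C \<subseteq> {z \<in> S. z \<le> x} \<and> Complete_Partial_Order.chain (\<le>) C} - 1"

definition covers_in :: "'c::order set \<Rightarrow> 'c \<Rightarrow> 'c \<Rightarrow> bool" where
  "covers_in S x y \<longleftrightarrow> x \<in> S \<and> y \<in> S \<and> x < y \<and> \<not> (\<exists>z\<in>S. x < z \<and> z < y)"

definition is_bot_in :: "'c::order set \<Rightarrow> 'c \<Rightarrow> bool" where
  "is_bot_in S b \<longleftrightarrow> b \<in> S \<and> (\<forall>z\<in>S. b \<le> z)"

definition atom_in :: "'c::order set \<Rightarrow> 'c \<Rightarrow> bool" where
  "atom_in S a \<longleftrightarrow> (\<exists>b. is_bot_in S b \<and> covers_in S b a)"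

definition modular_in :: "'c::order set \<Rightarrow> 'c \<Rightarrow> bool" where
  "modular_in S F \<longleftrightarrow> F \<in> S \<and> (\<forall>G\<in>S. rank_in S (meet_in S F G) + rank_in S (join_in S F G)
                                     = rank_in S F + rank_in S G)"

text \<open>Geometric lattice: a finite lattice which is ranked (covers raise the rank by one),
  atomic (each element is the join of the atoms below it) and semimodular.\<close>
definition geometric_lattice_on :: "'c::order set \<Rightarrow> bool" where
  "geometric_lattice_on S \<longleftrightarrow> finite S \<and> S \<noteq> {}
     \<and> (\<forall>x\<in>S. \<forall>y\<in>S. (\<exists>m. is_meet_in S x y m) \<and> (\<exists>j. is_join_in S x y j))
     \<and> (\<forall>x y. covers_in S x y \<longrightarrow> rank_in S y = rank_in S x + 1)
     \<and> (\<forall>x\<in>S. is_lub_in S {a. atom_in S a \<and> a \<le> x} x)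
     \<and> (\<forall>x\<in>S. \<forall>y\<in>S. rank_in S (meet_in S x y) + rank_in S (join_in S x y) \<le> rank_in S x + rank_in S y)"

definition lattice_embedding :: "('a::finite_lattice_complete \<Rightarrow> 'b::finite_lattice_complete) \<Rightarrow> bool" where
  "lattice_embedding \<iota> \<longleftrightarrow> inj \<iota> \<and> mono \<iota> \<and> (\<forall>x y. \<iota> (sup x y) = sup (\<iota> x) (\<iota> y))
     \<and> (\<forall>a. atom_in UNIV a \<longrightarrow> atom_in UNIV (\<iota> a))"

definition modular_extension :: "('a::finite_lattice_complete \<Rightarrow> 'b::finite_lattice_complete) \<Rightarrow> bool" where
  "modular_extension \<iota> \<longleftrightarrow> geometric_lattice_on (UNIV :: 'b set) \<and> lattice_embedding \<iota>
     \<and> (\<exists>F\<iota>. range \<iota> = {y. y \<le> F\<iota>} \<and> modular_in UNIV F\<iota>)"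

definition modular_cut_in :: "'c::order set \<Rightarrow> 'c set \<Rightarrow> bool" where
  "modular_cut_in P M \<longleftrightarrow> M \<subseteq> P
     \<and> (\<forall>X\<in>M. \<forall>Y\<in>P. X \<le> Y \<longrightarrow> Y \<in> M)
     \<and> (\<forall>X\<in>M. \<forall>Y\<in>M. rank_in P X + rank_in P Y = rank_in P (meet_in P X Y) + rank_in P (join_in P X Y)
            \<longrightarrow> meet_in P X Y \<in> M)"

end

theory Submission
  imports Defs
begin


lemma rank_set_finite:
  "finite S \<Longrightarrow> finite {card C |C. C \<subseteq> {z \<in> S. z \<le> x} \<and> Complete_Partial_Order.chain (\<le>) C}"
  by (rule finite_subset[of _ "card ` Pow S"]) auto

lemma chain_card_le:
  fixes g :: "'c::order \<Rightarrow> nat"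
  assumes "finite S" "x \<in> S" "\<forall>u\<in>S. \<forall>v\<in>S. u < v \<longrightarrow> g u < g v"
    "C \<subseteq> {z\<in>S. z \<le> x}" "Complete_Partial_Order.chain (\<le>) C"
  shows "card C \<le> g x + 1"
proof -
  have inj: "inj_on g C"
  proof (rule inj_onI)
    fix u v assume uv: "u \<in> C" "v \<in> C" "g u = g v"
    show "u = v"
    proof (rule ccontr)
      assume "u \<noteq> v"
      then have "u < v \<or> v < u" using chainD[OF assms(5) uv(1,2)] by auto
      moreover have "u \<in> S" "v \<in> S" using assms(4) uv by auto
      ultimately show False using assms(3) uv by (metis less_irrefl)
    qed
  qed
  have "g ` C \<subseteq> {..g x}"
  proof
    fix w assume "w \<in> g ` C"
    then obtain z where z: "z \<in> C" "w = g z" by auto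
    then have "z \<le> x" "z \<in> S" using assms(4) by auto
    then have "z = x \<or> z < x" by auto
    then show "w \<in> {..g x}" using assms(2,3) z \<open>z \<in> S\<close> by (auto intro: less_imp_le)
  qed
  then have "card (g ` C) \<le> card {..g x}" by (rule card_mono[rotated]) simp
  with card_image[OF inj] show ?thesis by simp
qed

lemma chain_exists:
  fixes g :: "'c::order \<Rightarrow> nat"
  assumes fin: "finite S" and b: "b \<in> S" "\<forall>z\<in>S. b \<le> z" "g b = 0"
    and sm: "\<forall>u\<in>S. \<forall>v\<in>S. u < v \<longrightarrow> g u < g v"
    and btw: "\<forall>u\<in>S. \<forall>v\<in>S. u < v \<longrightarrow> g u + 2 \<le> g v \<longrightarrow> (\<exists>w\<in>S. u < w \<and> w < v)"
  shows "x \<in> S \<Longrightarrow> \<exists>C. C \<subseteq> {z\<in>S. z \<le> x} \<and> Complete_Partial_Order.chain (\<le>) C \<and> card C = g x + 1"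
proof (induction "g x" arbitrary: x rule: less_induct)
  case less
  show ?case
  proof (cases "x = b")
    case True then show ?thesis using b by (intro exI[of _ "{b}"]) (auto simp: chain_def)
  next
    case False
    let ?T = "{z\<in>S. z < x}"
    have "b \<in> ?T" using False b less.prems by (auto simp: order.order_iff_strict)
    then obtain z where z: "z \<in> ?T" "\<forall>w\<in>?T. z \<le> w \<longrightarrow> z = w"
      using finite_has_maximal[of ?T] fin by auto
    have gz: "g z < g x" using z sm less.prems by auto
    have "g x \<le> g z + 1"
    proof (rule ccontr)
      assume "\<not> ?thesis" then have "g z + 2 \<le> g x" by simp
      then obtain w where "w \<in> S" "z < w" "w < x" using btw z less.prems by blast
      then show False using z by auto
    qed
    obtain C where C: "C \<subseteq> {y\<in>S. y \<le> z}" "Complete_Partial_Order.chain (\<le>) C" "card C = g z + 1"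
      using less.hyps[OF gz] z by auto
    have xC: "x \<notin> C" using C z by auto
    have finC: "finite C" using C(1) fin by (auto intro: finite_subset)
    have "insert x C \<subseteq> {y\<in>S. y \<le> x}" using C(1) z less.prems by auto
    moreover have "Complete_Partial_Order.chain (\<le>) (insert x C)"
      using C(1,2) z unfolding chain_def by (auto intro: order_trans less_imp_le)
    moreover have "card (insert x C) = g x + 1" using xC finC C(3) gz \<open>g x \<le> g z + 1\<close> by simp
    ultimately show ?thesis by blast
  qed
qed

lemma rank_char:
  fixes g :: "'c::order \<Rightarrow> nat"
  assumes fin: "finite S" and b: "b \<in> S" "\<forall>z\<in>S. b \<le> z" "g b = 0"
    and sm: "\<forall>u\<in>S. \<forall>v\<in>S. u < v \<longrightarrow> g u < g v"
    and btw: "\<forall>u\<in>S. \<forall>v\<in>S. u < v \<longrightarrow> g u + 2 \<le> g v \<longrightarrow> (\<exists>w\<in>S. u < w \<and> w < v)"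
    and x: "x \<in> S"
  shows "rank_in S x = g x"
proof -
  have "Max {card C |C. C \<subseteq> {z \<in> S. z \<le> x} \<and> Complete_Partial_Order.chain (\<le>) C} = g x + 1"
  proof (rule Max_eqI)
    show "finite {card C |C. C \<subseteq> {z \<in> S. z \<le> x} \<and> Complete_Partial_Order.chain (\<le>) C}"
      by (rule rank_set_finite[OF fin])
    fix y assume "y \<in> {card C |C. C \<subseteq> {z \<in> S. z \<le> x} \<and> Complete_Partial_Order.chain (\<le>) C}"
    then show "y \<le> g x + 1" using chain_card_le[OF fin x sm] by auto
  next
    show "g x + 1 \<in> {card C |C. C \<subseteq> {z \<in> S. z \<le> x} \<and> Complete_Partial_Order.chain (\<le>) C}"
    proof -
      obtain C where "C \<subseteq> {z\<in>S. z \<le> x}" "Complete_Partial_Order.chain (\<le>) C" "card C = g x + 1"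
        using chain_exists[OF fin b sm btw x] by blast
      then show ?thesis by (metis (mono_tags, lifting) mem_Collect_eq)
    qed
  qed
  then show ?thesis unfolding rank_in_def by simp
qed

lemma rank_strict:
  fixes x y :: "'c::order"
  assumes fin: "finite S" and xy: "x \<in> S" "y \<in> S" "x < y"
  shows "rank_in S x < rank_in S y"
proof -
  let ?Ax = "{card C |C. C \<subseteq> {z \<in> S. z \<le> x} \<and> Complete_Partial_Order.chain (\<le>) C}"
  let ?Ay = "{card C |C. C \<subseteq> {z \<in> S. z \<le> y} \<and> Complete_Partial_Order.chain (\<le>) C}"
  have fx: "finite ?Ax" and fy: "finite ?Ay" using rank_set_finite[OF fin] by auto
  have "card {x} \<in> ?Ax" using xy by (auto simp: chain_def intro!: exI[of _ "{x}"])
  then have ne: "?Ax \<noteq> {}" and one: "1 \<le> Max ?Ax" using Max_ge[OF fx] by auto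
  obtain C where C: "C \<subseteq> {z \<in> S. z \<le> x}" "Complete_Partial_Order.chain (\<le>) C" "card C = Max ?Ax"
    using Max_in[OF fx ne] by auto
  have finC: "finite C" using C(1) fin by (auto intro: finite_subset)
  have yC: "y \<notin> C" using C(1) xy by auto
  have "insert y C \<subseteq> {z \<in> S. z \<le> y}" using C(1) xy by auto
  moreover have "Complete_Partial_Order.chain (\<le>) (insert y C)"
    using C(1,2) xy unfolding chain_def by (auto intro: order_trans less_imp_le)
  ultimately have "card (insert y C) \<in> ?Ay" by blast
  then have "card (insert y C) \<le> Max ?Ay" using Max_ge[OF fy] by auto
  then have "Max ?Ax + 1 \<le> Max ?Ay" using C(3) finC yC by simp
  then show ?thesis using one unfolding rank_in_def by simp
qed

lemma rank_bot:
  fixes b :: "'c::order"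
  assumes fin: "finite S" and b: "b \<in> S" "\<forall>z\<in>S. b \<le> z"
  shows "rank_in S b = 0"
proof -
  let ?A = "{card C |C. C \<subseteq> {z \<in> S. z \<le> b} \<and> Complete_Partial_Order.chain (\<le>) C}"
  have "\<forall>c\<in>?A. c \<le> 1"
  proof
    fix c assume "c \<in> ?A"
    then obtain C where C: "C \<subseteq> {z \<in> S. z \<le> b}" "c = card C" by auto
    then have "C \<subseteq> {b}" using b by (auto intro: antisym)
    then have "card C \<le> card {b}" by (intro card_mono) auto
    then show "c \<le> 1" using C by simp
  qed
  moreover have "card {b} \<in> ?A" using b by (auto simp: chain_def intro!: exI[of _ "{b}"])
  ultimately have "Max ?A \<le> 1" using rank_set_finite[OF fin] by (subst Max_le_iff) auto
  then show ?thesis unfolding rank_in_def by simp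
qed

lemma meet_UNIV: "meet_in UNIV x y = inf x (y::'c::lattice)"
  unfolding meet_in_def by (rule the_equality) (auto simp: is_meet_in_def intro: antisym)

lemma join_UNIV: "join_in UNIV x y = sup x (y::'c::lattice)"
  unfolding join_in_def by (rule the_equality) (auto simp: is_join_in_def intro: antisym)

lemma geo_cov: "geometric_lattice_on (UNIV::'c::{finite,lattice} set) \<Longrightarrow> covers_in UNIV x y
   \<Longrightarrow> rank_in UNIV (y::'c) = rank_in UNIV x + 1"
  unfolding geometric_lattice_on_def by blast

lemma geo_semi: "geometric_lattice_on (UNIV::'c::{finite,lattice} set) \<Longrightarrow>
   rank_in UNIV (inf x y) + rank_in UNIV (sup x y) \<le> rank_in UNIV x + rank_in UNIV (y::'c)"
  unfolding geometric_lattice_on_def meet_UNIV join_UNIV by blast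

lemma geo_lub: "geometric_lattice_on (UNIV::'c::{finite,lattice} set) \<Longrightarrow>
   is_lub_in UNIV {a. atom_in UNIV a \<and> a \<le> x} (x::'c)"
  unfolding geometric_lattice_on_def by blast

lemma geo_strict: "x < y \<Longrightarrow> rank_in UNIV x < rank_in UNIV (y::'c::{finite,order})"
  by (rule rank_strict) auto

lemma geo_bot: "rank_in UNIV (bot::'c::{finite,order_bot}) = 0"
  by (rule rank_bot) auto

lemma geo_atom: "geometric_lattice_on (UNIV::'c::{finite,lattice} set) \<Longrightarrow> atom_in UNIV H
   \<Longrightarrow> rank_in UNIV (H::'c) = 1"
proof -
  assume g: "geometric_lattice_on (UNIV::'c set)" and "atom_in UNIV H"
  then obtain b where b: "is_bot_in UNIV b" "covers_in UNIV b H" unfolding atom_in_def by auto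
  have "rank_in UNIV b = 0" using b(1) by (intro rank_bot) (auto simp: is_bot_in_def)
  then show ?thesis using geo_cov[OF g b(2)] by simp
qed

lemma geo_between: "geometric_lattice_on (UNIV::'c::{finite,lattice} set) \<Longrightarrow> x < y \<Longrightarrow>
   rank_in UNIV x + 2 \<le> rank_in UNIV (y::'c) \<Longrightarrow> \<exists>z. x < z \<and> z < y"
proof (rule ccontr)
  assume g: "geometric_lattice_on (UNIV::'c set)" and xy: "x < y" "rank_in UNIV x + 2 \<le> rank_in UNIV y"
    and n: "\<not> (\<exists>z. x < z \<and> z < y)"
  then have c: "covers_in UNIV x y" unfolding covers_in_def by auto
  show False using geo_cov[OF g c] xy by simp
qed


locale glue =
  fixes \<iota> :: "'a::finite_lattice_complete \<Rightarrow> 'b::finite_lattice_complete" and F :: 'a and Fi :: 'b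
  assumes geoL: "geometric_lattice_on (UNIV::'a set)"
    and geoE: "geometric_lattice_on (UNIV::'b set)"
    and inj\<iota>: "inj \<iota>" and mono\<iota>: "mono \<iota>" and sup\<iota>: "\<And>x y. \<iota> (sup x y) = sup (\<iota> x) (\<iota> y)"
    and range\<iota>: "range \<iota> = {y. y \<le> Fi}"
    and modF: "modular_in UNIV F"
    and coF: "rank_in UNIV F + 1 = rank_in UNIV (top::'a)"
begin

lemma le_iff: "\<iota> x \<le> \<iota> y \<longleftrightarrow> x \<le> y"
proof
  assume "\<iota> x \<le> \<iota> y"
  then have "\<iota> (sup x y) = \<iota> y" using sup\<iota> by (simp add: sup.absorb2)
  then have "sup x y = y" using inj\<iota> by (simp add: inj_eq)
  then show "x \<le> y" by (simp add: sup.absorb_iff2)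
qed (use mono\<iota> in \<open>simp add: monoD\<close>)

lemma le_Fi: "\<iota> x \<le> Fi" using range\<iota> by auto

lemma in_range: "y \<le> Fi \<Longrightarrow> \<exists>z. y = \<iota> z" using range\<iota> by (metis mem_Collect_eq rangeE)

lemma inf\<iota>: "\<iota> (inf x y) = inf (\<iota> x) (\<iota> y)"
proof -
  have "inf (\<iota> x) (\<iota> y) \<le> Fi" using le_Fi[of x] by (rule inf.coboundedI1)
  then obtain z where z: "inf (\<iota> x) (\<iota> y) = \<iota> z" using in_range by blast
  then have "z \<le> x" "z \<le> y" using le_iff by (metis inf.cobounded1 inf.cobounded2)+
  then have "\<iota> z \<le> \<iota> (inf x y)" using le_iff by simp
  moreover have "\<iota> (inf x y) \<le> inf (\<iota> x) (\<iota> y)" using le_iff by simp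
  ultimately show ?thesis using z by (auto intro: antisym)
qed

lemma bot\<iota>: "\<iota> bot = bot"
proof -
  obtain z where "bot = \<iota> z" using in_range[of bot] by auto
  then show ?thesis using le_iff[of bot z] by (metis bot.extremum bot.extremum_uniqueI)
qed

lemma inv_in: "y \<le> Fi \<Longrightarrow> \<iota> (inv \<iota> y) = y"
  using in_range by (metis f_inv_into_f rangeI)

lemma inv_f: "inv \<iota> (\<iota> x) = x" using inv_f_f[OF inj\<iota>] .

lemma memP: "(inf A F = inv \<iota> (inf B (\<iota> F))) \<longleftrightarrow> \<iota> (inf A F) = inf B (\<iota> F)"
proof
  have l: "inf B (\<iota> F) \<le> Fi" using le_Fi[of F] by (rule inf.coboundedI2)
  show "inf A F = inv \<iota> (inf B (\<iota> F)) \<Longrightarrow> \<iota> (inf A F) = inf B (\<iota> F)" using inv_in[OF l] by simp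
  show "\<iota> (inf A F) = inf B (\<iota> F) \<Longrightarrow> inf A F = inv \<iota> (inf B (\<iota> F))" using inv_f by metis
qed

lemma L_meetF: assumes "\<not> A \<le> F" shows "rank_in UNIV (inf A F) + 1 = rank_in UNIV A"
proof -
  have "sup F A = top"
  proof (rule ccontr)
    assume "sup F A \<noteq> top"
    then have "sup F A < top" using top.not_eq_extremum by blast
    moreover have "F < sup F A" using assms by (metis sup.cobounded1 sup.cobounded2 less_le)
    ultimately have "rank_in UNIV F < rank_in UNIV (sup F A)" "rank_in UNIV (sup F A) < rank_in UNIV (top::'a)"
      using geo_strict by blast+
    then show False using coF by simp
  qed
  moreover have "rank_in UNIV (meet_in UNIV F A) + rank_in UNIV (join_in UNIV F A) = rank_in UNIV F + rank_in UNIV A"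
    using modF unfolding modular_in_def by blast
  ultimately show ?thesis using coF by (simp add: meet_UNIV join_UNIV inf_commute)
qed

lemma L_sup_atom: "atom_in UNIV H \<Longrightarrow> rank_in UNIV (sup c H) \<le> rank_in UNIV (c::'a) + 1"
  using geo_semi[OF geoL, of c H] geo_atom[OF geoL, of H] by simp

lemma L_atomic: assumes "\<not> A \<le> F" shows "\<exists>H. atom_in UNIV H \<and> H \<le> A \<and> \<not> H \<le> F"
proof (rule ccontr)
  assume "\<not> ?thesis"
  then have "\<forall>a\<in>{a. atom_in UNIV a \<and> a \<le> A}. a \<le> F" by auto
  then show False using geo_lub[OF geoL, of A] assms unfolding is_lub_in_def by blast
qed

lemma L_decomp: assumes "\<not> D \<le> F" "atom_in UNIV H" "H \<le> D" "\<not> H \<le> F"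
  shows "sup (inf D F) H = D"
proof (rule ccontr)
  let ?c = "inf D F" let ?s = "sup ?c H"
  assume ne: "?s \<noteq> D"
  have sD: "?s \<le> D" using assms by simp
  have "?s < D" using order.not_eq_order_implies_strict[OF ne sD] .
  then have "rank_in UNIV ?s < rank_in UNIV D" by (rule geo_strict)
  moreover have "?c < ?s" using assms(4) by (metis inf.absorb_iff2 inf.cobounded2 inf.orderE le_sup_iff less_le sup_ge1)
  then have "rank_in UNIV ?c < rank_in UNIV ?s" by (rule geo_strict)
  ultimately show False using L_meetF[OF assms(1)] by simp
qed

lemma L_sup_c_H: assumes "atom_in UNIV H" "\<not> H \<le> F" "c \<le> F"
  shows "inf (sup c H) F = c"
proof (rule ccontr)
  let ?s = "sup c H"
  assume ne: "inf ?s F \<noteq> c"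
  have nF: "\<not> ?s \<le> F" using assms by simp
  have cs: "c \<le> inf ?s F" using assms by simp
  have "c < inf ?s F" using order.not_eq_order_implies_strict[OF ne[symmetric] cs] .
  then have "rank_in UNIV c < rank_in UNIV (inf ?s F)" by (rule geo_strict)
  then show False using L_meetF[OF nF] L_sup_atom[OF assms(1), of c] by simp
qed

definition PP :: "('a \<times> 'b) set" where "PP = {(A, B). inf A F = inv \<iota> (inf B (\<iota> F))}"

definition gP :: "'a \<times> 'b \<Rightarrow> nat" where
  "gP p = rank_in UNIV (snd p) + (if fst p \<le> F then 0 else 1)"

lemma memPP: "(A, B) \<in> PP \<longleftrightarrow> \<iota> (inf A F) = inf B (\<iota> F)"
  unfolding PP_def using memP by simp

lemma gP_strict: assumes "p \<in> PP" "q \<in> PP" "p < q" shows "gP p < gP q"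
proof -
  obtain A B A' B' where pq: "p = (A, B)" "q = (A', B')" by fastforce
  have le: "A \<le> A'" "B \<le> B'" and ne: "(A, B) \<noteq> (A', B')" using assms(3) pq by (auto simp: less_le)
  have P1: "\<iota> (inf A F) = inf B (\<iota> F)" and P2: "\<iota> (inf A' F) = inf B' (\<iota> F)" using assms pq memPP by auto
  show ?thesis
  proof (cases "B = B'")
    case False
    then have "rank_in UNIV B < rank_in UNIV B'" using le by (intro geo_strict) simp
    moreover have "A' \<le> F \<Longrightarrow> A \<le> F" using le by simp
    ultimately show ?thesis using pq unfolding gP_def by auto
  next
    case True
    then have AA: "A \<noteq> A'" using ne by simp
    have eqF: "inf A F = inf A' F" using P1 P2 True inj\<iota> by (metis injD)
    show ?thesis
    proof (cases "A \<le> F")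
      case True
      then have "\<not> A' \<le> F" using eqF AA by (metis inf.absorb1)
      then show ?thesis using True \<open>B = B'\<close> pq unfolding gP_def by simp
    next
      case False
      then have "\<not> A' \<le> F" using le by (auto intro: order_trans)
      then have "rank_in UNIV A = rank_in UNIV A'" using L_meetF False eqF by metis
      moreover have "A < A'" using le AA by simp
      then have "rank_in UNIV A < rank_in UNIV A'" by (rule geo_strict)
      ultimately show ?thesis by simp
    qed
  qed
qed

lemma gP_between: assumes "p \<in> PP" "q \<in> PP" "p < q" "gP p + 2 \<le> gP q"
  shows "\<exists>w\<in>PP. p < w \<and> w < q"
proof -
  obtain A B A' B' where pq: "p = (A, B)" "q = (A', B')" by fastforce
  have le: "A \<le> A'" "B \<le> B'" using assms(3) pq by (auto simp: less_le)
  have P1: "\<iota> (inf A F) = inf B (\<iota> F)" and P2: "\<iota> (inf A' F) = inf B' (\<iota> F)" using assms pq memPP by auto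
  have KF: "\<iota> F \<le> Fi" by (rule le_Fi)
  show ?thesis
  proof (cases "A' \<le> F")
    case True
    then have AF: "A \<le> F" using le by (auto intro: order_trans)
    have r: "rank_in UNIV B + 2 \<le> rank_in UNIV B'" using assms(4) True AF pq unfolding gP_def by simp
    then have "B \<noteq> B'" by auto
    then have "B < B'" using le by simp
    then obtain B'' where B'': "B < B''" "B'' < B'" using geo_between[OF geoE _ r] by blast
    define A'' where "A'' = inv \<iota> (inf B'' (\<iota> F))"
    have iA: "\<iota> A'' = inf B'' (\<iota> F)" unfolding A''_def by (intro inv_in inf.coboundedI2 KF)
    have inP: "(A'', B'') \<in> PP" unfolding memPP inf\<iota> iA by (simp add: inf_assoc)
    have "\<iota> A \<le> \<iota> A''" using P1 AF iA B''(1) by (metis inf.absorb1 inf.mono order.refl less_imp_le)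
    then have "A \<le> A''" using le_iff by simp
    moreover have "\<iota> A'' \<le> \<iota> A'" using P2 True iA B''(2) by (metis inf.absorb1 inf.mono order.refl less_imp_le)
    then have "A'' \<le> A'" using le_iff by simp
    ultimately show ?thesis using inP B'' pq by (intro bexI[of _ "(A'', B'')"]) (auto simp: less_le)
  next
    case nA': False
    show ?thesis
    proof (cases "A \<le> F")
      case True
      have "rank_in UNIV B + 1 \<le> rank_in UNIV B'" using assms(4) True nA' pq unfolding gP_def by simp
      then have "B \<noteq> B'" by auto
      have inP: "(inf A' F, B') \<in> PP" unfolding memPP using P2 by (simp add: inf_assoc)
      have "A \<le> inf A' F" using True le by simp
      moreover have "inf A' F \<noteq> A'" using nA' by (metis inf.cobounded2)
      ultimately show ?thesis using inP \<open>B \<noteq> B'\<close> le pq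
        by (intro bexI[of _ "(inf A' F, B')"]) (auto simp: less_le)
    next
      case nA: False
      have r: "rank_in UNIV B + 2 \<le> rank_in UNIV B'" using assms(4) nA nA' pq unfolding gP_def by simp
      then have "B \<noteq> B'" by auto
      then have "B < B'" using le by simp
      then obtain B'' where B'': "B < B''" "B'' < B'" using geo_between[OF geoE _ r] by blast
      define c where "c = inv \<iota> (inf B'' (\<iota> F))"
      have ic: "\<iota> c = inf B'' (\<iota> F)" unfolding c_def by (intro inv_in inf.coboundedI2 KF)
      have "\<iota> c \<le> \<iota> F" using ic by simp
      then have cF: "c \<le> F" using le_iff by simp
      have "\<iota> (inf A F) \<le> \<iota> c" using P1 ic B''(1) by (metis inf.mono order.refl less_imp_le)
      then have ac: "inf A F \<le> c" using le_iff by simp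
      have "\<iota> c \<le> \<iota> (inf A' F)" using P2 ic B''(2) by (metis inf.mono order.refl less_imp_le)
      then have "c \<le> inf A' F" using le_iff by simp
      then have cA': "c \<le> A'" by simp
      obtain H where H: "atom_in UNIV H" "H \<le> A" "\<not> H \<le> F" using L_atomic[OF nA] by blast
      have Adec: "sup (inf A F) H = A" using L_decomp[OF nA H(1,2,3)] .
      define A'' where "A'' = sup A c"
      have A''eq: "A'' = sup c H" unfolding A''_def using Adec ac
        by (metis sup.absorb_iff2 sup_assoc sup_commute)
      have "inf A'' F = c" unfolding A''eq using L_sup_c_H[OF H(1,3) cF] .
      then have inP: "(A'', B'') \<in> PP" unfolding memPP using ic by simp
      have "A \<le> A''" "A'' \<le> A'" unfolding A''_def using le cA' by auto
      then show ?thesis using inP B'' pq by (intro bexI[of _ "(A'', B'')"]) (auto simp: less_le)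
    qed
  qed
qed

lemma botPP: "(bot, bot) \<in> PP" unfolding memPP by (simp add: bot\<iota>)

lemma P_rank: "p \<in> PP \<Longrightarrow> rank_in PP p = gP p"
proof (rule rank_char[of PP "(bot, bot)"])
  show "finite PP" by simp
  show "(bot, bot) \<in> PP" by (rule botPP)
  show "\<forall>z\<in>PP. (bot, bot) \<le> z" by (auto simp: less_eq_prod_def)
  show "gP (bot, bot) = 0" unfolding gP_def by (simp add: geo_bot)
  show "\<forall>u\<in>PP. \<forall>v\<in>PP. u < v \<longrightarrow> gP u < gP v" using gP_strict by blast
  show "\<forall>u\<in>PP. \<forall>v\<in>PP. u < v \<longrightarrow> gP u + 2 \<le> gP v \<longrightarrow> (\<exists>w\<in>PP. u < w \<and> w < v)"
    using gP_between by blast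
qed

end


lemma join_in_eq: "is_join_in S x y (j::'c::order) \<Longrightarrow> join_in S x y = j"
  unfolding join_in_def by (rule the_equality) (auto simp: is_join_in_def intro: antisym)

context glue
begin

lemma M_char: assumes "(A, B) \<in> PP" "atom_in UNIV H" "\<not> H \<le> F" "H \<le> A" "\<iota> H \<le> B"
  shows "\<iota> A \<le> B" "\<not> A \<le> F"
proof -
  show nA: "\<not> A \<le> F" using assms by (auto intro: order_trans)
  have P: "\<iota> (inf A F) = inf B (\<iota> F)" using assms(1) memPP by simp
  have "\<iota> A = sup (\<iota> (inf A F)) (\<iota> H)" using L_decomp[OF nA assms(2,4,3)] sup\<iota> by metis
  also have "\<dots> = sup (inf B (\<iota> F)) (\<iota> H)" using P by simp
  also have "\<dots> \<le> B" using assms(5) by simp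
  finally show "\<iota> A \<le> B" .
qed

lemma inf_in: assumes "(A1, B1) \<in> PP" "(A2, B2) \<in> PP" shows "(inf A1 A2, inf B1 B2) \<in> PP"
proof -
  have "\<iota> (inf (inf A1 A2) F) = \<iota> (inf (inf A1 F) (inf A2 F))" by (simp add: inf_aci)
  also have "\<dots> = inf (inf B1 (\<iota> F)) (inf B2 (\<iota> F))" using assms memPP inf\<iota> by simp
  also have "\<dots> = inf (inf B1 B2) (\<iota> F)" by (simp add: inf_aci)
  finally show ?thesis using memPP by simp
qed

lemma meet_PP: assumes "p \<in> PP" "q \<in> PP" shows "meet_in PP p q = inf p q" "inf p q \<in> PP"
proof -
  show i: "inf p q \<in> PP" using assms inf_in by (cases p, cases q) auto
  show "meet_in PP p q = inf p q"
    unfolding meet_in_def by (rule the_equality) (use i in \<open>auto simp: is_meet_in_def intro: antisym\<close>)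
qed

lemma cut: "modular_cut_in PP {(A, B). inf A F = inv \<iota> (inf B (\<iota> F))
                    \<and> (\<exists>H. atom_in UNIV H \<and> \<not> H \<le> F \<and> H \<le> A \<and> \<iota> H \<le> B)}"
  (is "modular_cut_in PP ?M")
  unfolding modular_cut_in_def
proof (intro conjI ballI impI)
  show "?M \<subseteq> PP" by (auto simp: PP_def)
next
  fix X Y assume X: "X \<in> ?M" and Y: "Y \<in> PP" and XY: "X \<le> Y"
  then show "Y \<in> ?M" by (cases X, cases Y) (auto simp: PP_def less_eq_prod_def intro: order_trans)
next
  fix X Y assume X: "X \<in> ?M" and Y: "Y \<in> ?M"
    and eq: "rank_in PP X + rank_in PP Y = rank_in PP (meet_in PP X Y) + rank_in PP (join_in PP X Y)"
  obtain A1 B1 A2 B2 where XY: "X = (A1, B1)" "Y = (A2, B2)" by fastforce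
  have XP: "(A1, B1) \<in> PP" and YP: "(A2, B2) \<in> PP" using X Y XY by (auto simp: PP_def)
  obtain H1 where H1: "atom_in UNIV H1" "\<not> H1 \<le> F" "H1 \<le> A1" "\<iota> H1 \<le> B1" using X XY by auto
  obtain H2 where H2: "atom_in UNIV H2" "\<not> H2 \<le> F" "H2 \<le> A2" "\<iota> H2 \<le> B2" using Y XY by auto
  have iA1: "\<iota> A1 \<le> B1" and nA1: "\<not> A1 \<le> F" using M_char[OF XP H1] by auto
  have iA2: "\<iota> A2 \<le> B2" and nA2: "\<not> A2 \<le> F" using M_char[OF YP H2] by auto
  have meet: "meet_in PP X Y = (inf A1 A2, inf B1 B2)" and ZP: "(inf A1 A2, inf B1 B2) \<in> PP"
    using meet_PP[of X Y] XP YP XY by auto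
  show "meet_in PP X Y \<in> ?M"
  proof (cases "inf A1 A2 \<le> F")
    case False
    obtain H where H: "atom_in UNIV H" "H \<le> inf A1 A2" "\<not> H \<le> F" using L_atomic[OF False] by blast
    have "\<iota> H \<le> \<iota> (inf A1 A2)" using H(2) le_iff by simp
    also have "\<dots> \<le> inf B1 B2" using iA1 iA2 inf\<iota> by (simp add: le_infI1 le_infI2)
    finally show ?thesis using meet ZP H by (auto simp: PP_def)
  next
    case True
    define W where "W = sup B1 B2"
    define D where "D = inv \<iota> (inf W Fi)"
    have iD: "\<iota> D = inf W Fi" unfolding D_def by (intro inv_in inf.cobounded2)
    have KF: "\<iota> F \<le> Fi" by (rule le_Fi)
    have JP: "(D, W) \<in> PP" unfolding memPP inf\<iota> iD using KF by (simp add: inf_assoc inf.absorb2)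
    have "\<iota> A1 \<le> inf W Fi" using iA1 le_Fi[of A1] unfolding W_def by (simp add: le_supI1)
    then have A1D: "A1 \<le> D" using iD le_iff by metis
    have "\<iota> A2 \<le> inf W Fi" using iA2 le_Fi[of A2] unfolding W_def by (simp add: le_supI2)
    then have A2D: "A2 \<le> D" using iD le_iff by metis
    have nD: "\<not> D \<le> F" using A1D nA1 by (auto intro: order_trans)
    have Ddec: "sup (inf D F) H1 = D" using L_decomp[OF nD H1(1) _ H1(2)] H1(3) A1D by (auto intro: order_trans)
    have isj: "is_join_in PP X Y (D, W)"
      unfolding is_join_in_def
    proof (intro conjI ballI impI)
      show "(D, W) \<in> PP" by (rule JP)
      show "X \<le> (D, W)" using XY A1D unfolding W_def by (simp add: less_eq_prod_def)
      show "Y \<le> (D, W)" using XY A2D unfolding W_def by (simp add: less_eq_prod_def)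
    next
      fix z assume zP: "z \<in> PP" and ub: "X \<le> z \<and> Y \<le> z"
      obtain A B where z: "z = (A, B)" by fastforce
      have le: "A1 \<le> A" "W \<le> B" using ub XY z unfolding W_def by (auto simp: less_eq_prod_def)
      have Pz: "\<iota> (inf A F) = inf B (\<iota> F)" using zP z memPP by simp
      have "\<iota> (inf D F) = inf W (\<iota> F)" using JP memPP by simp
      also have "\<dots> \<le> inf B (\<iota> F)" using le(2) by (simp add: inf.coboundedI1)
      finally have "inf D F \<le> inf A F" using Pz le_iff by metis
      then have "inf D F \<le> A" by simp
      moreover have "H1 \<le> A" using H1(3) le(1) by (rule order_trans)
      ultimately have "D \<le> A" using Ddec by (metis sup_least)
      then show "(D, W) \<le> z" using z le(2) by (simp add: less_eq_prod_def)
    qed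
    have join: "join_in PP X Y = (D, W)"
      by (rule join_in_eq[OF isj])
    have r1: "rank_in PP X = rank_in UNIV B1 + 1" using P_rank[OF XP] XY nA1 by (simp add: gP_def)
    have r2: "rank_in PP Y = rank_in UNIV B2 + 1" using P_rank[OF YP] XY nA2 by (simp add: gP_def)
    have r3: "rank_in PP (meet_in PP X Y) = rank_in UNIV (inf B1 B2)" using P_rank[OF ZP] meet True by (simp add: gP_def)
    have r4: "rank_in PP (join_in PP X Y) = rank_in UNIV W + 1" using P_rank[OF JP] join nD by (simp add: gP_def)
    have "rank_in UNIV (inf B1 B2) + rank_in UNIV (sup B1 B2) \<le> rank_in UNIV B1 + rank_in UNIV B2"
      by (rule geo_semi[OF geoE])
    then have False using eq r1 r2 r3 r4 unfolding W_def by simp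
    then show ?thesis ..
  qed
qed

end

theorem mainTheorem14:
  fixes \<iota> :: "'a::finite_lattice_complete \<Rightarrow> 'b::finite_lattice_complete"
    and F :: 'a
  assumes "geometric_lattice_on (UNIV :: 'a set)"
    and "modular_extension \<iota>"
    and "modular_in UNIV F"
    and "rank_in UNIV F + 1 = rank_in UNIV (top :: 'a)"
  shows "modular_cut_in
           {(A, B). inf A F = inv \<iota> (inf B (\<iota> F))}
           {(A, B). inf A F = inv \<iota> (inf B (\<iota> F))
                    \<and> (\<exists>H. atom_in UNIV H \<and> \<not> H \<le> F \<and> H \<le> A \<and> \<iota> H \<le> B)}"
proof -
  obtain Fi where Fi: "range \<iota> = {y. y \<le> Fi}" and
    e: "geometric_lattice_on (UNIV :: 'b set)" "lattice_embedding \<iota>"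
    using assms(2) unfolding modular_extension_def by blast
  interpret glue \<iota> F Fi
    using assms(1,3,4) Fi e unfolding lattice_embedding_def by unfold_locales auto
  show ?thesis using cut unfolding PP_def .
qed

end
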